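(* Let $R$ be a $*$-ring with unity such that $xa=ax^*$ for all $a,x\in R$. Then the natural partial order is compatible with multiplication: if $a\leq b$ then $ca\leq cb$ (and $ac\leq bc$) for all $c\in R$.
   Context: The natural partial order on a $*$-ring $R$ with unity: $a\leq b$ iff there is $x\in R$ with $a=xa=xb=ax^*=bx^*$. *)

theory Defs
  imports Main
begin

class star_ring_1 = ring_1 +
  fixes star :: "'a \<Rightarrow> 'a"
  assumes star_add: "star (a + b) = star a + star b"
    and star_mult: "star (a * b) = star b * star a"
    and star_star: "star (star a) = a"

definition nat_le :: "'a::star_ring_1 \<Rightarrow> 'a \<Rightarrow> bool" where
  "nat_le a b \<longleftrightarrow> (\<exists>x. a = x * a \<and> a = x * b \<and> a = a * star x \<and> a = b * star x)"

end

theory Submission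
  imports Defs
begin

theorem mainTheorem5:
  fixes a b :: "'a::star_ring_1"
  assumes comm: "\<And>u x :: 'a. x * u = u * star x"
    and le: "nat_le a b"
  shows "\<forall>c::'a. nat_le (c * a) (c * b) \<and> nat_le (a * c) (b * c)"
proof
  fix c :: 'a
  have st: "\<And>x::'a. star x = x" proof - fix x :: 'a show "star x = x" using comm[of x 1] by simp qed
  have cm: "\<And>x u::'a. x * u = u * x" using comm st by metis
  obtain x where x: "a = x * a" "a = x * b" "a = a * star x" "a = b * star x"
    using le unfolding nat_le_def by blast
  have x': "a = x * a" "a = x * b" "a = a * x" "a = b * x" using x st by auto
  have "c * a = x * (c * a) \<and> c * a = x * (c * b) \<and> c * a = c * a * star x \<and> c * a = c * b * star x"
    by (metis x' st cm mult.assoc)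
  moreover have "a * c = x * (a * c) \<and> a * c = x * (b * c) \<and> a * c = a * c * star x \<and> a * c = b * c * star x"
    by (metis x' st cm mult.assoc)
  ultimately show "nat_le (c * a) (c * b) \<and> nat_le (a * c) (b * c)"
    unfolding nat_le_def by blast
qed

end
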